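(* With $\partial_u=\frac qL\frac d{dq}$ and $Z:=L^5$, the following identities of $q$-series hold: $\partial_u\mathcal X_1=\mathcal X_2$, $\partial_u\mathcal X_2=\mathcal X_3$, $\partial_u(L^{-a}Z^b)=\frac15(5b-a)L^{-a}Z^bL^{-1}(Z-1)$, $$\partial_u\mathcal Y=-3\mathcal X_2-\mathcal Y^2-\mathcal X^2-\tfrac35L^{-2}Z(Z-1),$$ $$\partial_u\mathcal X_3=-4\mathcal X\mathcal X_3-3\mathcal X_2^2-6\mathcal X^2\mathcal X_2-\mathcal X^4-\tfrac35L^{-2}Z(Z-1)(\mathcal X^2+\mathcal X_2)-\tfrac3{25}L^{-3}Z(Z-1)(8Z-3)\mathcal X+\tfrac1{625}L^{-4}Z(-396Z^3+714Z^2-341Z+23),$$ where $\mathcal X=\mathcal X_1$. Consequently these formulas define a derivation $\partial_u$ of $\mathbf R$ which preserves $\mathbf R$, raises degree by $1$, and is compatible with $\frac qL\frac d{dq}$ under $Z=L^5$.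
   Context: $I(q,z)=z\sum_{d\ge0}q^d\prod_{k=1}^{5d}(5H+kz)/\prod_{k=1}^d(H+kz)^5$ with $H^4=0$, $I=zI_0+I_1H+z^{-1}I_2H^2+z^{-2}I_3H^3$; $I_{1,1}=1+q\frac d{dq}(I_1/I_0)$; $L=(1-5^5q)^{-1/5}$; $\mathcal X_k=\partial_u^k\log(I_0/L)$; $\mathcal Y=\partial_u\log(I_0I_{1,1}/L^2)$. $\mathbf R=\mathbb Q[\mathcal X_1,\mathcal X_2,\mathcal X_3,\mathcal Y]\otimes\mathrm{span}_{\mathbb Q}\{L^{-a}Z^b: a,b\ge0,\ b\le a\le 5b\}$ graded by $\deg L^{-1}=1$, $\deg\mathcal X_k=k$, $\deg\mathcal Y=1$, $\deg Z=0$. *)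

theory Defs
  imports "HOL-Computational_Algebra.Formal_Power_Series"
begin

text \<open>All q-series are formal power series in q (fps_X) over the rationals.\<close>

text \<open>Coefficient of H^j (with z = 1, by homogeneity) of the d-th summand of the I-function:
  the power series expansion in H at H = 0 of prod_{k=1}^{5d}(5H+k) / prod_{k=1}^{d}(H+k)^5.\<close>
definition Isummand :: "nat \<Rightarrow> rat fps" where
  "Isummand d = (\<Prod>k\<in>{1..5*d}. 5 * fps_X + fps_const (of_nat k))
      * inverse ((\<Prod>k\<in>{1..d}. fps_X + fps_const (of_nat k)) ^ 5)"

definition Icoeff :: "nat \<Rightarrow> rat fps" where
  "Icoeff j = Abs_fps (\<lambda>d. fps_nth (Isummand d) j)"

definition I0 :: "rat fps" where "I0 = Icoeff 0"
definition I1 :: "rat fps" where "I1 = Icoeff 1"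

definition qd :: "rat fps \<Rightarrow> rat fps" where "qd f = fps_X * fps_deriv f"

definition I11 :: "rat fps" where "I11 = 1 + qd (I1 * inverse I0)"

text \<open>L = (1 - 5^5 q)^(-1/5)\<close>
definition L :: "rat fps" where
  "L = Abs_fps (\<lambda>n. ((- 1 / 5) gchoose n) * (- (5 ^ 5)) ^ n)"

definition Zs :: "rat fps" where "Zs = L ^ 5"

definition du :: "rat fps \<Rightarrow> rat fps" where "du f = qd f * inverse L"

text \<open>partial_u log f, written as the logarithmic derivative (f has constant term 1)\<close>
definition dulog :: "rat fps \<Rightarrow> rat fps" where "dulog f = du f * inverse f"

text \<open>X_k = partial_u^k log(I0/L), for k \<ge> 1\<close>
definition Xc :: "nat \<Rightarrow> rat fps" where
  "Xc k = (du ^^ (k - 1)) (dulog (I0 * inverse L))"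

definition Yc :: "rat fps" where
  "Yc = dulog (I0 * I11 * inverse (L ^ 2))"

text \<open>Monomials X1^i X2^j X3^k Y^l L^{-a} Z^b (as q-series), admissible when b \<le> a \<le> 5b,
  of degree i + 2j + 3k + l + a.\<close>
type_synonym mon = "nat \<times> nat \<times> nat \<times> nat \<times> nat \<times> nat"

fun monval :: "mon \<Rightarrow> rat fps" where
  "monval (i, j, k, l, a, b) =
     Xc 1 ^ i * Xc 2 ^ j * Xc 3 ^ k * Yc ^ l * inverse L ^ a * Zs ^ b"

fun admissible :: "mon \<Rightarrow> bool" where
  "admissible (i, j, k, l, a, b) \<longleftrightarrow> b \<le> a \<and> a \<le> 5 * b"

fun mdeg :: "mon \<Rightarrow> nat" where
  "mdeg (i, j, k, l, a, b) = i + 2 * j + 3 * k + l + a"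

text \<open>Image in q-series of the degree-n part of R, and of R.\<close>
definition Rdeg :: "nat \<Rightarrow> rat fps set" where
  "Rdeg n = {f. \<exists>M c. finite M \<and> (\<forall>m\<in>M. admissible m \<and> mdeg m = n)
                   \<and> f = (\<Sum>m\<in>M. fps_const (c m) * monval m)}"

definition Rset :: "rat fps set" where
  "Rset = {f. \<exists>M c. finite M \<and> (\<forall>m\<in>M. admissible m)
                   \<and> f = (\<Sum>m\<in>M. fps_const (c m) * monval m)}"

end

theory Submission
  imports Defs
begin
unbundle fps_syntax


lemma qd_add[simp]: "qd (f + g) = qd f + qd g" by (simp add: qd_def algebra_simps)
lemma qd_diff[simp]: "qd (f - g) = qd f - qd g" by (simp add: qd_def algebra_simps)
lemma qd_uminus[simp]: "qd (- f) = - qd f" by (simp add: qd_def)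
lemma qd_mult[simp]: "qd (f * g) = qd f * g + f * qd g" by (simp add: qd_def algebra_simps)
lemma qd_const[simp]: "qd (fps_const c) = 0" by (simp add: qd_def)
lemma qd_zero[simp]: "qd 0 = 0" by (simp add: qd_def)
lemma qd_one[simp]: "qd 1 = 0" by (simp add: qd_def)
lemma qd_numeral[simp]: "qd (numeral n) = 0" by (simp add: qd_def)
lemma qd_power[simp]: "qd (f ^ n) = of_nat n * f ^ (n - 1) * qd f"
  by (simp add: qd_def fps_deriv_power' algebra_simps)
lemma qd_inverse: "f $ 0 \<noteq> 0 \<Longrightarrow> qd (inverse f) = - qd f * (inverse f)^2"
  by (simp add: qd_def fps_inverse_deriv)
lemma qd_nth: "qd f $ n = of_nat n * f $ n"
  by (cases n) (simp_all add: qd_def)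

lemma numeral_mult_nth[simp]: "(numeral k * f) $ n = numeral k * (f $ n :: 'a::comm_ring_1)"
  by (simp add: numeral_fps_const)

lemma L_nth0[simp]: "L $ 0 = 1" by (simp add: L_def)

lemma L_ode: "(1 - 3125 * fps_X) * fps_deriv L = 625 * L"
proof (rule fps_ext)
  fix n
  define g where "g = (\<lambda>k. ((- 1 / 5 :: rat) gchoose k))"
  have g: "of_nat (Suc k) * g (Suc k) = (- 1/5 - of_nat k) * g k" for k
    using gbinomial_mult_1[of "- 1 / 5 :: rat" k] unfolding g_def by (simp add: algebra_simps)
  have Ln: "L $ k = g k * (- 3125) ^ k" for k by (simp add: L_def g_def)
  have e0: "(1 - 3125 * fps_X) * fps_deriv L = fps_deriv L - 3125 * (fps_X * fps_deriv L)"
    by (simp add: algebra_simps)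
  have e1: "((1 - 3125 * fps_X) * fps_deriv L) $ n = fps_deriv L $ n - 3125 * (if n = 0 then 0 else fps_deriv L $ (n - 1))"
    unfolding e0 by (simp del: fps_X_mult_nth fps_deriv_nth) simp
  have e2: "(625 * L) $ n = 625 * L $ n" by simp
  show "((1 - 3125 * fps_X) * fps_deriv L) $ n = (625 * L) $ n"
  proof (cases n)
    case 0 then show ?thesis using g[of 0] by (simp add: Ln)
  next
    case (Suc m)
    have a: "fps_deriv L $ n = of_nat (Suc n) * g (Suc n) * (- 3125) ^ Suc n"
      by (simp add: Ln)
    also have "\<dots> = (- 1/5 - of_nat n) * g n * (- 3125) ^ Suc n" using g[of n] by simp
    also have "\<dots> = (625 + 3125 * of_nat n) * L $ n" by (simp add: Ln field_simps)
    finally have a: "fps_deriv L $ n = (625 + 3125 * of_nat n) * L $ n" .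
    have b: "fps_deriv L $ (n - 1) = of_nat n * L $ n" using Suc by simp
    show ?thesis unfolding e1 e2 using Suc a b by (simp add: algebra_simps)
  qed
qed

definition c5 :: "rat fps" where "c5 = fps_const (1/5)"
lemma five_c5: "5 * c5 = 1"
  by (simp add: c5_def numeral_fps_const)

lemma Z_inv: "(1 - 3125 * fps_X) * Zs = 1"
proof -
  define W where "W = (1 - 3125 * fps_X) * L ^ 5"
  have "fps_deriv W = - 3125 * L ^ 5 + 5 * L ^ 4 * ((1 - 3125 * fps_X) * fps_deriv L)"
    unfolding W_def by (simp add: fps_deriv_power')
  also have "\<dots> = 0" unfolding L_ode by algebra
  finally have "W = fps_const (W $ 0)" by simp
  moreover have "W $ 0 = 1" unfolding W_def by (simp add: fps_nth_power_0)
  ultimately show ?thesis unfolding Zs_def W_def by simp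
qed

lemma L_deriv: "fps_deriv L = 625 * L * Zs"
proof -
  have "fps_deriv L = ((1 - 3125 * fps_X) * Zs) * fps_deriv L" using Z_inv by simp
  also have "\<dots> = Zs * ((1 - 3125 * fps_X) * fps_deriv L)" by (simp add: algebra_simps)
  finally show ?thesis unfolding L_ode by (simp add: algebra_simps)
qed

lemma qd_L: "qd L = c5 * L * (Zs - 1)"
proof -
  have "qd L = 625 * fps_X * L * Zs" by (simp add: qd_def L_deriv algebra_simps)
  then show ?thesis using Z_inv five_c5 by algebra
qed

lemma Zs_nth0[simp]: "Zs $ 0 = 1" by (simp add: Zs_def fps_nth_power_0)

lemma qd_Zs: "qd Zs = Zs * (Zs - 1)"
proof -
  have "qd Zs = 5 * L ^ 4 * qd L" by (simp add: Zs_def)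
  also have "\<dots> = (5 * c5) * L ^ 5 * (Zs - 1)" unfolding qd_L by algebra
  finally show ?thesis by (simp add: five_c5 Zs_def)
qed

lemma L_B: "L * inverse L = 1" by (simp add: inverse_mult_eq_1')
lemma B_nth0[simp]: "inverse L $ 0 = 1" by simp

lemma qd_B: "qd (inverse L) = - c5 * (Zs - 1) * inverse L"
proof -
  have "qd (inverse L) = - qd L * (inverse L)^2" by (simp add: qd_inverse)
  then show ?thesis using L_B unfolding qd_L by algebra
qed



lemma Isum_rec:
  "Isummand (Suc d) * (fps_X + fps_const (of_nat (Suc d)))^4
   = 5 * Isummand d * ((5 * fps_X + fps_const (of_nat (5*d+1))) * (5 * fps_X + fps_const (of_nat (5*d+2)))
       * (5 * fps_X + fps_const (of_nat (5*d+3))) * (5 * fps_X + fps_const (of_nat (5*d+4))))"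
proof -
  define N where "N = (\<lambda>d. \<Prod>k\<in>{1..5*d}. 5 * fps_X + fps_const (of_nat k :: rat))"
  define Dn where "Dn = (\<lambda>d. \<Prod>k\<in>{1..d}. fps_X + fps_const (of_nat k :: rat))"
  define c where "c = fps_X + fps_const (of_nat (Suc d) :: rat)"
  define Q where "Q = (5 * fps_X + fps_const (of_nat (5*d+1) :: rat)) * (5 * fps_X + fps_const (of_nat (5*d+2)))
       * (5 * fps_X + fps_const (of_nat (5*d+3))) * (5 * fps_X + fps_const (of_nat (5*d+4)))"
  have IS: "Isummand d = N d * inverse (Dn d ^ 5)" for d unfolding Isummand_def N_def Dn_def by simp
  have c0: "c $ 0 \<noteq> 0" unfolding c_def by simp
  have cnz: "c \<noteq> 0" using c0 by auto
  have eq: "5 * Suc d = Suc (Suc (Suc (Suc (Suc (5*d)))))" by simp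
  have nl: "\<not> Suc n < (1::nat)" for n by simp
  define g where "g = (\<lambda>k. 5 * fps_X + fps_const (of_nat k :: rat))"
  have "N (Suc d) = N d * g (Suc (5*d)) * g (Suc (Suc (5*d))) * g (Suc (Suc (Suc (5*d))))
     * g (Suc (Suc (Suc (Suc (5*d))))) * g (Suc (Suc (Suc (Suc (Suc (5*d))))))"
    unfolding N_def g_def eq by (simp only: prod.cl_ivl_Suc nl if_False)
  moreover have "g (Suc (Suc (Suc (Suc (Suc (5*d)))))) = 5 * c"
    unfolding g_def c_def by (simp add: numeral_fps_const algebra_simps)
  moreover have "g (Suc (5*d)) * g (Suc (Suc (5*d))) * g (Suc (Suc (Suc (5*d))))
     * g (Suc (Suc (Suc (Suc (5*d))))) = Q"
    unfolding g_def Q_def by (simp add: add.commute)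
  ultimately have NS: "N (Suc d) = N d * Q * (5 * c)" by (simp add: mult.assoc)
  have DS: "Dn (Suc d) = Dn d * c" unfolding Dn_def c_def by simp
  have inv5: "inverse (c ^ 5) * c ^ 5 = 1" using c0 by (simp add: inverse_mult_eq_1 fps_nth_power_0)
  have "Isummand (Suc d) * c ^ 5 = N (Suc d) * inverse (Dn d ^ 5) * (inverse (c^5) * c ^ 5)"
    unfolding IS DS by (simp add: power_mult_distrib fps_inverse_mult algebra_simps)
  also have "\<dots> = Isummand d * (5 * Q) * c" unfolding inv5 NS IS by (simp add: algebra_simps)
  finally have "Isummand (Suc d) * c ^ 5 = Isummand d * (5 * Q) * c" .
  then have "(Isummand (Suc d) * c ^ 4) * c = (5 * Isummand d * Q) * c"
    by algebra
  then have "Isummand (Suc d) * c ^ 4 = 5 * Isummand d * Q" using cnz mult_right_cancel by blast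
  then show ?thesis unfolding c_def Q_def .
qed

lemma lin_nth0[simp]: "(u * fps_X + fps_const r) $ 0 = (r::rat)" by simp
lemma lin_nth1[simp]: "(u * fps_X + fps_const r) $ Suc 0 = (u $ 0 :: rat)" by simp

lemma Isum_coeffs:
  fixes d :: nat
  defines "a \<equiv> \<lambda>d. Isummand d $ 0" and "b \<equiv> \<lambda>d. Isummand d $ 1"
  shows "a (Suc d) * (of_nat d + 1)^4 = a d * (3125 * of_nat d^4 + 6250 * of_nat d^3 + 4375 * of_nat d^2 + 1250 * of_nat d + 120)"
    and "b (Suc d) * (of_nat d + 1)^4 + 4 * (of_nat d + 1)^3 * a (Suc d)
       = b d * (3125 * of_nat d^4 + 6250 * of_nat d^3 + 4375 * of_nat d^2 + 1250 * of_nat d + 120)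
       + a d * (12500 * of_nat d^3 + 18750 * of_nat d^2 + 8750 * of_nat d + 1250)"
proof -
  define c where "c = 1 * fps_X + fps_const (of_nat (Suc d) :: rat)"
  define g where "g = (\<lambda>k. 5 * fps_X + fps_const (of_nat (5*d+k) :: rat))"
  have R: "Isummand (Suc d) * (c*c*c*c) = 5 * Isummand d * (g 1 * g 2 * g 3 * g 4)"
    using Isum_rec[of d] unfolding c_def g_def by (simp add: power4_eq_xxxx)
  have c0: "c $ 0 = of_nat d + 1" and c1: "c $ Suc 0 = 1" unfolding c_def by simp_all
  have g0: "g k $ 0 = 5 * of_nat d + of_nat k" and g1: "g k $ Suc 0 = 5" for k
    unfolding g_def by (simp_all add: numeral_fps_const)
  have "(Isummand (Suc d) * (c*c*c*c)) $ 0 = (5 * Isummand d * (g 1 * g 2 * g 3 * g 4)) $ 0"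
    using R by simp
  then show "a (Suc d) * (of_nat d + 1)^4 = a d * (3125 * of_nat d^4 + 6250 * of_nat d^3 + 4375 * of_nat d^2 + 1250 * of_nat d + 120)"
    unfolding a_def by (simp add: c0 g0 algebra_simps power4_eq_xxxx power3_eq_cube power2_eq_square)
  have "(Isummand (Suc d) * (c*c*c*c)) $ Suc 0 = (5 * Isummand d * (g 1 * g 2 * g 3 * g 4)) $ Suc 0"
    using R by simp
  then show "b (Suc d) * (of_nat d + 1)^4 + 4 * (of_nat d + 1)^3 * a (Suc d)
       = b d * (3125 * of_nat d^4 + 6250 * of_nat d^3 + 4375 * of_nat d^2 + 1250 * of_nat d + 120)
       + a d * (12500 * of_nat d^3 + 18750 * of_nat d^2 + 8750 * of_nat d + 1250)"
    unfolding a_def b_def by (simp add: c0 c1 g0 g1 fps_numeral_nth algebra_simps power4_eq_xxxx power3_eq_cube power2_eq_square)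
qed

lemma I0_nth: "I0 $ n = Isummand n $ 0" by (simp add: I0_def Icoeff_def)
lemma I1_nth: "I1 $ n = Isummand n $ 1" by (simp add: I1_def Icoeff_def)

lemma PF0: "qd (qd (qd (qd I0))) = fps_X * (3125 * qd (qd (qd (qd I0))) + 6250 * qd (qd (qd I0))
   + 4375 * qd (qd I0) + 1250 * qd I0 + 120 * I0)"
proof (rule fps_ext)
  fix n show "qd (qd (qd (qd I0))) $ n = (fps_X * (3125 * qd (qd (qd (qd I0))) + 6250 * qd (qd (qd I0))
   + 4375 * qd (qd I0) + 1250 * qd I0 + 120 * I0)) $ n"
  proof (cases n)
    case 0 then show ?thesis by (simp add: qd_nth)
  next
    case (Suc m)
    show ?thesis using Isum_coeffs(1)[of m] unfolding Suc
      by (simp add: qd_nth I0_nth) (simp add: algebra_simps power4_eq_xxxx power3_eq_cube power2_eq_square)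
  qed
qed

lemma PF1: "qd (qd (qd (qd I1))) + 4 * qd (qd (qd I0)) = fps_X * (3125 * qd (qd (qd (qd I1))) + 6250 * qd (qd (qd I1))
   + 4375 * qd (qd I1) + 1250 * qd I1 + 120 * I1
   + 12500 * qd (qd (qd I0)) + 18750 * qd (qd I0) + 8750 * qd I0 + 1250 * I0)"
proof (rule fps_ext)
  fix n show "(qd (qd (qd (qd I1))) + 4 * qd (qd (qd I0))) $ n = (fps_X * (3125 * qd (qd (qd (qd I1))) + 6250 * qd (qd (qd I1))
   + 4375 * qd (qd I1) + 1250 * qd I1 + 120 * I1
   + 12500 * qd (qd (qd I0)) + 18750 * qd (qd I0) + 8750 * qd I0 + 1250 * I0)) $ n"
  proof (cases n)
    case 0 then show ?thesis by (simp add: qd_nth)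
  next
    case (Suc m)
    show ?thesis using Isum_coeffs(2)[of m] unfolding Suc
      by (simp add: qd_nth I0_nth I1_nth) (simp add: algebra_simps power4_eq_xxxx power3_eq_cube power2_eq_square)
  qed
qed



lemma Isummand_0: "Isummand 0 = 1" by (simp add: Isummand_def)
lemma I0_nth0[simp]: "I0 $ 0 = 1" by (simp add: I0_nth Isummand_0)
lemma I1_nth0[simp]: "I1 $ 0 = 0" by (simp add: I1_nth Isummand_0)

definition A0 :: "rat fps" where "A0 = inverse I0"
definition P1 :: "rat fps" where "P1 = qd I0 * A0"
definition P2 :: "rat fps" where "P2 = qd (qd I0) * A0"
definition P3 :: "rat fps" where "P3 = qd (qd (qd I0)) * A0"

lemma qd_c5[simp]: "qd c5 = 0" by (simp add: c5_def)
lemma qd_pow2: "qd (f ^ 2) = 2 * f * qd f" by (simp only: power2_eq_square qd_mult) algebra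
lemma qd_pow3: "qd (f ^ 3) = 3 * f ^ 2 * qd f"
proof -
  have "qd (f ^ 3) = of_nat 3 * f ^ (3 - 1) * qd f" by (rule qd_power)
  then show ?thesis by simp
qed
lemma qd_pow4: "qd (f ^ 4) = 4 * f ^ 3 * qd f"
proof -
  have "qd (f ^ 4) = of_nat 4 * f ^ (4 - 1) * qd f" by (rule qd_power)
  then show ?thesis by simp
qed
lemmas qd_simps = qd_zero qd_add qd_diff qd_uminus qd_mult qd_const qd_one qd_numeral qd_c5 qd_pow2 qd_pow3 qd_pow4

lemma I0_A0: "I0 * A0 = 1" unfolding A0_def by (simp add: inverse_mult_eq_1')
lemma qd_A0: "qd A0 = - qd I0 * A0 ^ 2" unfolding A0_def by (simp add: qd_inverse)

lemma c5_pow5: "3125 * c5 ^ 5 = 1"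
proof -
  have "3125 * c5 ^ 5 = (5 * c5) ^ 5" by (simp add: power_mult_distrib)
  then show ?thesis by (simp add: five_c5)
qed

lemma i4: "qd (qd (qd (qd I0))) = c5 ^ 5 * (Zs - 1) * (6250 * qd (qd (qd I0))
   + 4375 * qd (qd I0) + 1250 * qd I0 + 120 * I0)"
  using PF0 Z_inv c5_pow5 by algebra

lemma qd_P1: "qd P1 = P2 - P1 ^ 2"
  unfolding P1_def P2_def by (simp only: qd_simps qd_A0) algebra
lemma qd_P2: "qd P2 = P3 - P1 * P2"
  unfolding P1_def P2_def P3_def by (simp only: qd_simps qd_A0) algebra
lemma qd_P3: "qd P3 = c5 ^ 5 * (Zs - 1) * (6250 * P3 + 4375 * P2 + 1250 * P1 + 120) - P1 * P3"
  unfolding P1_def P2_def P3_def using I0_A0 by (simp only: qd_simps qd_A0 i4) algebra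

lemma qd_P3': "qd P3 = (Zs - 1) * (2 * P3 + 7 * c5 * P2 + 2 * c5 * P1 + 24 * c5^4) - P1 * P3"
  unfolding qd_P3 using five_c5 by algebra

lemma Xc1_eq: "Xc 1 = inverse L * (P1 - c5 * (Zs - 1))"
proof -
  have "Xc 1 = qd (I0 * inverse L) * inverse L * (A0 * L)"
    by (simp add: Xc_def dulog_def du_def fps_inverse_mult A0_def)
  then show ?thesis using I0_A0 L_B unfolding P1_def by (simp only: qd_simps qd_B) algebra
qed

lemma Xc2_eq: "Xc 2 = du (Xc 1)" by (simp add: Xc_def numeral_2_eq_2)
lemma Xc3_eq: "Xc 3 = du (Xc 2)" by (simp add: Xc_def numeral_3_eq_3 numeral_2_eq_2)

lemmas qd_rules = qd_P1 qd_P2 qd_P3' qd_B qd_Zs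

lemma fc35: "fps_const (3/5) = 3 * c5" by (simp add: c5_def numeral_fps_const)
lemma fc325: "fps_const (3/25) = 3 * c5^2" by (simp add: c5_def numeral_fps_const power2_eq_square)
lemma fc1625: "fps_const (1/625) = c5^4" by (simp add: c5_def numeral_fps_const power4_eq_xxxx)

lemma X3_ident: "du (Xc 3) = - 4 * Xc 1 * Xc 3 - 3 * Xc 2 ^ 2 - 6 * Xc 1 ^ 2 * Xc 2 - Xc 1 ^ 4
           - fps_const (3 / 5) * inverse L ^ 2 * Zs * (Zs - 1) * (Xc 1 ^ 2 + Xc 2)
           - fps_const (3 / 25) * inverse L ^ 3 * Zs * (Zs - 1) * (8 * Zs - 3) * Xc 1
           + fps_const (1 / 625) * inverse L ^ 4 * Zs
               * (- 396 * Zs ^ 3 + 714 * Zs ^ 2 - 341 * Zs + 23)"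
  unfolding Xc3_eq Xc2_eq Xc1_eq fc35 fc325 fc1625 du_def
  apply (simp only: qd_simps qd_rules)
  using five_c5 by algebra



definition J :: "rat fps" where "J = I1 * A0"
definition Ei :: "rat fps" where "Ei = inverse I11"
definition T1 :: "rat fps" where "T1 = qd I11 * Ei"
definition T2 :: "rat fps" where "T2 = qd (qd I11) * Ei"
definition T3 :: "rat fps" where "T3 = qd (qd (qd I11)) * Ei"

lemma qd_nth0[simp]: "qd f $ 0 = 0" by (simp add: qd_nth)
lemma I11_nth0[simp]: "I11 $ 0 = 1" by (simp add: I11_def)
lemma I11_Ei: "I11 * Ei = 1" unfolding Ei_def by (simp add: inverse_mult_eq_1')
lemma qd_Ei: "qd Ei = - qd I11 * Ei ^ 2" unfolding Ei_def by (simp add: qd_inverse)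
lemma qd_J: "qd J = I11 - 1" by (simp add: I11_def J_def A0_def)
lemma I1_J: "I1 = I0 * J" unfolding J_def using I0_A0 by algebra

lemma qd_T1: "qd T1 = T2 - T1 ^ 2"
  unfolding T1_def T2_def by (simp only: qd_simps qd_Ei) algebra
lemma qd_T2: "qd T2 = T3 - T1 * T2"
  unfolding T1_def T2_def T3_def by (simp only: qd_simps qd_Ei) algebra

lemma XZ: "fps_X * Zs = c5 ^ 5 * (Zs - 1)"
  using Z_inv c5_pow5 by algebra

lemma q4I1: "qd (qd (qd (qd I1))) = c5 ^ 5 * (Zs - 1) * (6250 * qd (qd (qd I1))
   + 4375 * qd (qd I1) + 1250 * qd I1 + 120 * I1
   + 12500 * qd (qd (qd I0)) + 18750 * qd (qd I0) + 8750 * qd I0 + 1250 * I0) - 4 * Zs * qd (qd (qd I0))"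
  using PF1 XZ Z_inv c5_pow5 by algebra

lemma q4I1c: "qd (qd (qd (qd I1))) = (Zs - 1) * (2 * qd (qd (qd I1))
   + 7 * c5 * qd (qd I1) + 2 * c5 * qd I1 + 24 * c5 ^ 4 * I1
   + 4 * qd (qd (qd I0)) + 6 * qd (qd I0) + 14 * c5 * qd I0 + 2 * c5 * I0) - 4 * Zs * qd (qd (qd I0))"
  unfolding q4I1 using five_c5 by algebra

lemma i4c: "qd (qd (qd (qd I0))) = ((Zs - 1) * (2 * P3 + 7 * c5 * P2 + 2 * c5 * P1 + 24 * c5 ^ 4)) * I0"
  unfolding i4 P1_def P2_def P3_def using five_c5 I0_A0 by algebra

lemma subs: "P1 * I0 = qd I0" "P2 * I0 = qd (qd I0)" "P3 * I0 = qd (qd (qd I0))"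
  "T1 * I11 = qd I11" "T2 * I11 = qd (qd I11)" "T3 * I11 = qd (qd (qd I11))"
  unfolding P1_def P2_def P3_def T1_def T2_def T3_def using I0_A0 I11_Ei by algebra+

lemma I0_nz: "I0 \<noteq> 0" using I0_nth0 by (metis fps_zero_nth zero_neq_one)
lemma I11_nz: "I11 \<noteq> 0" using I11_nth0 by (metis fps_zero_nth zero_neq_one)

lemma T3_eq: "T3 = (- 2 * c5 - 2 * T2 - 7 * T1 * c5 - 4 * P3 - 6 * P2 - 6 * P2 * T1 - 14 * P1 * c5 - 4 * P1 * T2 - 6 * P1 * T1 + 2 * Zs * c5 + 2 * Zs * T2 + 7 * Zs * T1 * c5 + 6 * Zs * P2 + 14 * Zs * P1 * c5 + 6 * Zs * P1 * T1)"
proof -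
  have e2: "qd (qd (qd (qd I0))) * J + 4 * qd (qd (qd I0)) * (I11 - 1) + 6 * qd (qd I0) * qd I11 + 4 * qd I0 * qd (qd I11) + I0 * qd (qd (qd I11)) = (Zs - 1) * (2 * (qd (qd (qd I0)) * J + 3 * qd (qd I0) * (I11 - 1) + 3 * qd I0 * qd I11 + I0 * qd (qd I11)) + 7 * c5 * (qd (qd I0) * J + 2 * qd I0 * (I11 - 1) + I0 * qd I11) + 2 * c5 * (qd I0 * J + I0 * (I11 - 1)) + 24 * c5 ^ 4 * (I0 * J) + 4 * qd (qd (qd I0)) + 6 * qd (qd I0) + 14 * c5 * qd I0 + 2 * c5 * I0) - 4 * Zs * qd (qd (qd I0))"
    using q4I1c unfolding I1_J by (simp only: qd_simps qd_J) algebra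
  have e3: "(((Zs - 1) * (2 * P3 + 7 * c5 * P2 + 2 * c5 * P1 + 24 * c5 ^ 4)) * I0) * J + 4 * (P3 * I0) * (I11 - 1) + 6 * (P2 * I0) * (T1 * I11) + 4 * (P1 * I0) * (T2 * I11) + I0 * (T3 * I11) = (Zs - 1) * (2 * ((P3 * I0) * J + 3 * (P2 * I0) * (I11 - 1) + 3 * (P1 * I0) * (T1 * I11) + I0 * (T2 * I11)) + 7 * c5 * ((P2 * I0) * J + 2 * (P1 * I0) * (I11 - 1) + I0 * (T1 * I11)) + 2 * c5 * ((P1 * I0) * J + I0 * (I11 - 1)) + 24 * c5 ^ 4 * (I0 * J) + 4 * (P3 * I0) + 6 * (P2 * I0) + 14 * c5 * (P1 * I0) + 2 * c5 * I0) - 4 * Zs * (P3 * I0)"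
    using e2 unfolding subs i4c[symmetric] .
  have "I0 * I11 * (T3 - (- 2 * c5 - 2 * T2 - 7 * T1 * c5 - 4 * P3 - 6 * P2 - 6 * P2 * T1 - 14 * P1 * c5 - 4 * P1 * T2 - 6 * P1 * T1 + 2 * Zs * c5 + 2 * Zs * T2 + 7 * Zs * T1 * c5 + 6 * Zs * P2 + 14 * Zs * P1 * c5 + 6 * Zs * P1 * T1)) = ((((Zs - 1) * (2 * P3 + 7 * c5 * P2 + 2 * c5 * P1 + 24 * c5 ^ 4)) * I0) * J + 4 * (P3 * I0) * (I11 - 1) + 6 * (P2 * I0) * (T1 * I11) + 4 * (P1 * I0) * (T2 * I11) + I0 * (T3 * I11)) - ((Zs - 1) * (2 * ((P3 * I0) * J + 3 * (P2 * I0) * (I11 - 1) + 3 * (P1 * I0) * (T1 * I11) + I0 * (T2 * I11)) + 7 * c5 * ((P2 * I0) * J + 2 * (P1 * I0) * (I11 - 1) + I0 * (T1 * I11)) + 2 * c5 * ((P1 * I0) * J + I0 * (I11 - 1)) + 24 * c5 ^ 4 * (I0 * J) + 4 * (P3 * I0) + 6 * (P2 * I0) + 14 * c5 * (P1 * I0) + 2 * c5 * I0) - 4 * Zs * (P3 * I0))"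
    by algebra
  then have "(I0 * I11) * (T3 - (- 2 * c5 - 2 * T2 - 7 * T1 * c5 - 4 * P3 - 6 * P2 - 6 * P2 * T1 - 14 * P1 * c5 - 4 * P1 * T2 - 6 * P1 * T1 + 2 * Zs * c5 + 2 * Zs * T2 + 7 * Zs * T1 * c5 + 6 * Zs * P2 + 14 * Zs * P1 * c5 + 6 * Zs * P1 * T1)) = 0" using e3 by simp
  then show ?thesis using I0_nz I11_nz by simp
qed

lemma fps_ode_zero:
  fixes G a :: "rat fps"
  assumes "qd G = a * G" "a $ 0 = 0" "G $ 0 = 0"
  shows "G = 0"
proof -
  have "G $ n = 0" for n
  proof (induction n rule: less_induct)
    case (less n)
    show ?case
    proof (cases n)
      case 0 then show ?thesis using assms(3) by simp
    next
      case (Suc m)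
      have "of_nat n * G $ n = (a * G) $ n" using assms(1) by (simp add: qd_nth[symmetric])
      also have "\<dots> = (\<Sum>i=0..n. a $ i * G $ (n - i))" by (simp add: fps_mult_nth)
      also have "\<dots> = 0"
      proof (rule sum.neutral, intro ballI)
        fix i assume "i \<in> {0..n}"
        show "a $ i * G $ (n - i) = 0"
        proof (cases i)
          case 0 then show ?thesis using assms(2) by simp
        next
          case (Suc j) then have "n - i < n" using Suc \<open>n = Suc m\<close> by simp
          then show ?thesis using less.IH by simp
        qed
      qed
      finally show ?thesis using Suc by simp
    qed
  qed
  then show ?thesis by (simp add: fps_ext)
qed

definition Gy :: "rat fps" where
  "Gy = T2 + (1 - Zs) * T1 + 2 * P1 * T1 + 4 * P2 - 2 * P1 ^ 2 + 2 * (1 - Zs) * P1 + 2 * c5 * (1 - Zs)"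

lemma qd_Gy: "qd Gy = (Zs - 1 - 2 * P1 - T1) * Gy"
  unfolding Gy_def using five_c5 by (simp only: qd_simps qd_rules qd_T1 qd_T2 T3_eq) algebra

lemma nth0_facts: "T1 $ 0 = 0" "T2 $ 0 = 0" "P1 $ 0 = 0" "P2 $ 0 = 0"
  unfolding T1_def T2_def P1_def P2_def by simp_all

lemma Gy_zero: "Gy = 0"
proof (rule fps_ode_zero[OF qd_Gy])
  show "(Zs - 1 - 2 * P1 - T1) $ 0 = 0" using nth0_facts by simp
  show "Gy $ 0 = 0" unfolding Gy_def using nth0_facts by (simp add: fps_numeral_nth)
qed

lemma Yc_eq: "Yc = inverse L * (P1 + T1 - 2 * c5 * (Zs - 1))"
proof -
  have L2: "(L ^ 2) $ 0 \<noteq> 0" by (simp add: fps_nth_power_0)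
  have "Yc = qd (I0 * I11 * inverse L ^ 2) * inverse L * (A0 * Ei * L ^ 2)"
    unfolding Yc_def dulog_def du_def A0_def Ei_def
    by (simp add: fps_inverse_mult fps_inverse_power L2)
  then show ?thesis unfolding P1_def T1_def
    using I0_A0 I11_Ei L_B by (simp only: qd_simps qd_B) algebra
qed

lemma Y_ident: "du Yc = - 3 * Xc 2 - Yc ^ 2 - Xc 1 ^ 2
           - fps_const (3 / 5) * inverse L ^ 2 * Zs * (Zs - 1)"
  unfolding Yc_eq Xc2_eq Xc1_eq fc35 du_def
  using Gy_zero five_c5 unfolding Gy_def
  by (simp only: qd_simps qd_rules qd_T1) algebra



definition Rgen :: "(mon \<Rightarrow> bool) \<Rightarrow> rat fps set" where
  "Rgen P = {f. \<exists>M c. finite M \<and> (\<forall>m\<in>M. P m) \<and> f = (\<Sum>m\<in>M. fps_const (c m) * monval m)}"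

lemma Rdeg_Rgen: "Rdeg n = Rgen (\<lambda>m. admissible m \<and> mdeg m = n)"
  unfolding Rdeg_def Rgen_def by simp
lemma Rset_Rgen: "Rset = Rgen admissible"
  unfolding Rset_def Rgen_def by simp

lemma Rgen_zero: "0 \<in> Rgen P"
  unfolding Rgen_def by (rule CollectI, rule exI[of _ "{}"]) simp

lemma Rgen_mon: "P m \<Longrightarrow> monval m \<in> Rgen P"
  unfolding Rgen_def by (rule CollectI, rule exI[of _ "{m}"], rule exI[of _ "\<lambda>_. 1"]) simp

lemma Rgen_smult: "f \<in> Rgen P \<Longrightarrow> fps_const r * f \<in> Rgen P"
proof -
  assume "f \<in> Rgen P"
  then obtain M c where M: "finite M" "\<forall>m\<in>M. P m" "f = (\<Sum>m\<in>M. fps_const (c m) * monval m)"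
    unfolding Rgen_def by blast
  have "fps_const r * f = (\<Sum>m\<in>M. fps_const (r * c m) * monval m)"
    unfolding M(3) sum_distrib_left
  proof (intro sum.cong refl)
    fix m show "fps_const r * (fps_const (c m) * monval m) = fps_const (r * c m) * monval m"
      by (subst mult.assoc[symmetric]) (simp only: fps_const_mult)
  qed
  then show ?thesis unfolding Rgen_def using M
    by (intro CollectI exI[of _ M] exI[of _ "\<lambda>m. r * c m"]) auto
qed

lemma Rgen_add: "f \<in> Rgen P \<Longrightarrow> g \<in> Rgen P \<Longrightarrow> f + g \<in> Rgen P"
proof -
  assume "f \<in> Rgen P" "g \<in> Rgen P"
  then obtain M1 c1 M2 c2 where M1: "finite M1" "\<forall>m\<in>M1. P m" "f = (\<Sum>m\<in>M1. fps_const (c1 m) * monval m)"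
    and M2: "finite M2" "\<forall>m\<in>M2. P m" "g = (\<Sum>m\<in>M2. fps_const (c2 m) * monval m)"
    unfolding Rgen_def by blast
  define M where "M = M1 \<union> M2"
  define d1 where "d1 = (\<lambda>m. if m \<in> M1 then c1 m else 0)"
  define d2 where "d2 = (\<lambda>m. if m \<in> M2 then c2 m else 0)"
  have fin: "finite M" unfolding M_def using M1 M2 by simp
  have "f = (\<Sum>m\<in>M. fps_const (d1 m) * monval m)"
    unfolding M1(3) by (rule sum.mono_neutral_cong_left) (use fin in \<open>auto simp: M_def d1_def\<close>)
  moreover have "g = (\<Sum>m\<in>M. fps_const (d2 m) * monval m)"
    unfolding M2(3) by (rule sum.mono_neutral_cong_left) (use fin in \<open>auto simp: M_def d2_def\<close>)
  ultimately have "f + g = (\<Sum>m\<in>M. fps_const (d1 m + d2 m) * monval m)"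
    by (simp add: sum.distrib[symmetric] distrib_right flip: fps_const_add)
  moreover have "\<forall>m\<in>M. P m" unfolding M_def using M1 M2 by blast
  ultimately show ?thesis unfolding Rgen_def using fin
    by (intro CollectI exI[of _ M] exI[of _ "\<lambda>m. d1 m + d2 m"]) auto
qed

lemma Rgen_sum: "finite S \<Longrightarrow> (\<And>i. i \<in> S \<Longrightarrow> h i \<in> Rgen P) \<Longrightarrow> sum h S \<in> Rgen P"
  by (induction S rule: finite_induct) (auto intro: Rgen_zero Rgen_add)

lemma Rgen_uminus: "f \<in> Rgen P \<Longrightarrow> - f \<in> Rgen P"
  using Rgen_smult[of f P "- 1"] by (simp flip: fps_const_neg)

lemma Rgen_diff: "f \<in> Rgen P \<Longrightarrow> g \<in> Rgen P \<Longrightarrow> f - g \<in> Rgen P"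
  using Rgen_add[of f P "- g"] Rgen_uminus[of g P] by simp

lemma Rgen_numeral: "f \<in> Rgen P \<Longrightarrow> numeral k * f \<in> Rgen P"
  using Rgen_smult[of f P "numeral k"] by (simp add: numeral_fps_const)

lemma Rgen_mono: "f \<in> Rgen P \<Longrightarrow> (\<And>m. P m \<Longrightarrow> Q m) \<Longrightarrow> f \<in> Rgen Q"
  unfolding Rgen_def by blast

lemma monval_mult: "monval (i1, j1, k1, l1, a1, b1) * monval (i2, j2, k2, l2, a2, b2)
   = monval (i1 + i2, j1 + j2, k1 + k2, l1 + l2, a1 + a2, b1 + b2)"
  by (simp only: monval.simps power_add) (simp only: ac_simps)

lemma Rdeg_mult: "f \<in> Rdeg n \<Longrightarrow> g \<in> Rdeg k \<Longrightarrow> f * g \<in> Rdeg (n + k)"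
proof -
  assume "f \<in> Rdeg n" "g \<in> Rdeg k"
  then obtain M1 c1 M2 c2 where M1: "finite M1" "\<forall>m\<in>M1. admissible m \<and> mdeg m = n" "f = (\<Sum>m\<in>M1. fps_const (c1 m) * monval m)"
    and M2: "finite M2" "\<forall>m\<in>M2. admissible m \<and> mdeg m = k" "g = (\<Sum>m\<in>M2. fps_const (c2 m) * monval m)"
    unfolding Rdeg_def by blast
  have "f * g = (\<Sum>m1\<in>M1. \<Sum>m2\<in>M2. (fps_const (c1 m1) * monval m1) * (fps_const (c2 m2) * monval m2))"
    unfolding M1(3) M2(3) by (rule sum_product)
  also have "\<dots> \<in> Rdeg (n + k)" unfolding Rdeg_Rgen
  proof (intro Rgen_sum M1 M2)
    fix m1 m2 assume h: "m1 \<in> M1" "m2 \<in> M2"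
    obtain i1 j1 k1 l1 a1 b1 where e1: "m1 = (i1, j1, k1, l1, a1, b1)" by (cases m1) auto
    obtain i2 j2 k2 l2 a2 b2 where e2: "m2 = (i2, j2, k2, l2, a2, b2)" by (cases m2) auto
    have "(fps_const (c1 m1) * monval m1) * (fps_const (c2 m2) * monval m2)
        = fps_const (c1 m1 * c2 m2) * (monval m1 * monval m2)" by (simp add: algebra_simps)
    also have "\<dots> = fps_const (c1 m1 * c2 m2) * monval (i1 + i2, j1 + j2, k1 + k2, l1 + l2, a1 + a2, b1 + b2)"
      unfolding e1 e2 monval_mult ..
    finally have eq: "(fps_const (c1 m1) * monval m1) * (fps_const (c2 m2) * monval m2)
       = fps_const (c1 m1 * c2 m2) * monval (i1 + i2, j1 + j2, k1 + k2, l1 + l2, a1 + a2, b1 + b2)" .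
    have "fps_const (c1 m1 * c2 m2) * monval (i1 + i2, j1 + j2, k1 + k2, l1 + l2, a1 + a2, b1 + b2)
        \<in> Rgen (\<lambda>m. admissible m \<and> mdeg m = n + k)"
    proof (rule Rgen_smult, rule Rgen_mon)
      have "admissible m1 \<and> mdeg m1 = n" "admissible m2 \<and> mdeg m2 = k" using h M1(2) M2(2) by blast+
      then show "admissible (i1 + i2, j1 + j2, k1 + k2, l1 + l2, a1 + a2, b1 + b2) \<and>
        mdeg (i1 + i2, j1 + j2, k1 + k2, l1 + l2, a1 + a2, b1 + b2) = n + k"
        unfolding e1 e2 by auto
    qed
    then show "(fps_const (c1 m1) * monval m1) * (fps_const (c2 m2) * monval m2)
        \<in> Rgen (\<lambda>m. admissible m \<and> mdeg m = n + k)" unfolding eq .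
  qed
  finally show ?thesis .
qed



lemma du_add: "du (f + g) = du f + du g" by (simp add: du_def algebra_simps)
lemma du_mult: "du (f * g) = du f * g + f * du g" by (simp add: du_def algebra_simps)
lemma du_cmult: "du (fps_const r * f) = fps_const r * du f" by (simp add: du_def algebra_simps)
lemma du_zero: "du 0 = 0" by (simp add: du_def)
lemma du_one: "du 1 = 0" by (simp add: du_def)
lemma du_sum: "du (sum h S) = (\<Sum>i\<in>S. du (h i))"
  by (induction S rule: infinite_finite_induct) (simp_all add: du_zero du_add)

lemma qd_Bpow: "qd (inverse L ^ a) = - of_nat a * c5 * (Zs - 1) * inverse L ^ a"
proof (induction a)
  case 0 then show ?case by simp
next
  case (Suc a)
  have "qd (inverse L ^ Suc a) = qd (inverse L) * inverse L ^ a + inverse L * qd (inverse L ^ a)"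
    by (simp only: power_Suc qd_mult)
  also have "\<dots> = - of_nat (Suc a) * c5 * (Zs - 1) * inverse L ^ Suc a"
    unfolding Suc qd_B by (simp add: algebra_simps)
  finally show ?case .
qed

lemma qd_Zpow: "qd (Zs ^ b) = of_nat b * (Zs - 1) * Zs ^ b"
proof (induction b)
  case 0 then show ?case by simp
next
  case (Suc b)
  have "qd (Zs ^ Suc b) = qd Zs * Zs ^ b + Zs * qd (Zs ^ b)"
    by (simp only: power_Suc qd_mult)
  also have "\<dots> = of_nat (Suc b) * (Zs - 1) * Zs ^ Suc b"
    unfolding Suc qd_Zs by (simp add: algebra_simps)
  finally show ?case .
qed

lemma fc_ab: "fps_const ((5 * of_nat b - of_nat a) / 5 :: rat) = of_nat b - of_nat a * c5"
proof -
  have "(5 * of_nat b - of_nat a) / 5 = (of_nat b :: rat) - of_nat a * (1/5)" by (simp add: field_simps)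
  moreover have "of_nat b - of_nat a * c5 = fps_const ((of_nat b :: rat) - of_nat a * (1/5))"
    by (simp add: c5_def fps_of_nat[symmetric])
  ultimately show ?thesis by (metis (no_types) divide_inverse mult_1)
qed

lemma BZ_ident: "du (inverse L ^ a * Zs ^ b)
           = fps_const ((5 * of_nat b - of_nat a) / 5) * inverse L ^ a * Zs ^ b
             * inverse L * (Zs - 1)"
  unfolding fc_ab du_def by (simp only: qd_mult qd_Bpow qd_Zpow) algebra

lemma Rdeg_zero: "0 \<in> Rdeg n" unfolding Rdeg_Rgen by (rule Rgen_zero)
lemma Rdeg_add: "f \<in> Rdeg n \<Longrightarrow> g \<in> Rdeg n \<Longrightarrow> f + g \<in> Rdeg n" unfolding Rdeg_Rgen by (rule Rgen_add)
lemma Rdeg_diff: "f \<in> Rdeg n \<Longrightarrow> g \<in> Rdeg n \<Longrightarrow> f - g \<in> Rdeg n" unfolding Rdeg_Rgen by (rule Rgen_diff)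
lemma Rdeg_uminus: "f \<in> Rdeg n \<Longrightarrow> - f \<in> Rdeg n" unfolding Rdeg_Rgen by (rule Rgen_uminus)
lemma Rdeg_smult: "f \<in> Rdeg n \<Longrightarrow> fps_const r * f \<in> Rdeg n" unfolding Rdeg_Rgen by (rule Rgen_smult)
lemma Rdeg_numeral: "f \<in> Rdeg n \<Longrightarrow> numeral k * f \<in> Rdeg n" unfolding Rdeg_Rgen by (rule Rgen_numeral)
lemma Rdeg_mon: "admissible m \<Longrightarrow> mdeg m = n \<Longrightarrow> monval m \<in> Rdeg n"
  unfolding Rdeg_Rgen by (rule Rgen_mon) simp
lemma Rdeg_cong: "f \<in> Rdeg n \<Longrightarrow> n = k \<Longrightarrow> f \<in> Rdeg k" by simp

lemma Rdeg_one: "1 \<in> Rdeg 0"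
  using Rdeg_mon[of "(0,0,0,0,0,0)" 0] by simp

lemma Rdeg_pow: "f \<in> Rdeg n \<Longrightarrow> f ^ k \<in> Rdeg (k * n)"
proof (induction k)
  case 0 then show ?case using Rdeg_one by simp
next
  case (Suc k)
  then have "f * f ^ k \<in> Rdeg (n + k * n)" by (intro Rdeg_mult)
  then show ?case by simp
qed

lemma mX1: "Xc 1 \<in> Rdeg 1" using Rdeg_mon[of "(1,0,0,0,0,0)" 1] by simp
lemma mX2: "Xc 2 \<in> Rdeg 2" using Rdeg_mon[of "(0,1,0,0,0,0)" 2] by simp
lemma mX3: "Xc 3 \<in> Rdeg 3" using Rdeg_mon[of "(0,0,1,0,0,0)" 3] by simp
lemma mY: "Yc \<in> Rdeg 1" using Rdeg_mon[of "(0,0,0,1,0,0)" 1] by simp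
lemma mBZ: "b \<le> a \<Longrightarrow> a \<le> 5 * b \<Longrightarrow> inverse L ^ a * Zs ^ b \<in> Rdeg a"
  using Rdeg_mon[of "(0,0,0,0,a,b)" a] by simp

lemma duBZ_mem: assumes "b \<le> a" "a \<le> 5 * b" shows "du (inverse L ^ a * Zs ^ b) \<in> Rdeg (Suc a)"
proof (cases "a = 5 * b")
  case True
  then have "fps_const ((5 * of_nat b - of_nat a) / 5 :: rat) = 0" by simp
  then show ?thesis unfolding BZ_ident using Rdeg_zero by simp
next
  case False
  have e: "du (inverse L ^ a * Zs ^ b) = fps_const ((5 * of_nat b - of_nat a) / 5)
     * (inverse L ^ Suc a * Zs ^ Suc b - inverse L ^ Suc a * Zs ^ b)"
    unfolding BZ_ident by (simp only: power_Suc) algebra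
  show ?thesis unfolding e using assms False by (intro Rdeg_smult Rdeg_diff mBZ) auto
qed

lemma duX3_mem: "du (Xc 3) \<in> Rdeg 4"
proof -
  define B where "B = inverse L"
  have e: "du (Xc 3) = - (4 * (Xc 1 * Xc 3)) - 3 * Xc 2 ^ 2 - 6 * (Xc 1 ^ 2 * Xc 2) - Xc 1 ^ 4
     - fps_const (3/5) * ((B ^ 2 * Zs ^ 2 - B ^ 2 * Zs ^ 1) * (Xc 1 ^ 2 + Xc 2))
     - fps_const (3/25) * ((8 * (B ^ 3 * Zs ^ 3) - 11 * (B ^ 3 * Zs ^ 2) + 3 * (B ^ 3 * Zs ^ 1)) * Xc 1)
     + fps_const (1/625) * (- (396 * (B ^ 4 * Zs ^ 4)) + 714 * (B ^ 4 * Zs ^ 3) - 341 * (B ^ 4 * Zs ^ 2) + 23 * (B ^ 4 * Zs ^ 1))"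
    unfolding X3_ident B_def by algebra
  have a1: "Xc 1 * Xc 3 \<in> Rdeg 4" using Rdeg_mult[OF mX1 mX3] by simp
  have a2: "Xc 2 ^ 2 \<in> Rdeg 4" using Rdeg_pow[OF mX2, of 2] by simp
  have a3: "Xc 1 ^ 2 * Xc 2 \<in> Rdeg 4" using Rdeg_mult[OF Rdeg_pow[OF mX1, of 2] mX2] by simp
  have a4: "Xc 1 ^ 4 \<in> Rdeg 4" using Rdeg_pow[OF mX1, of 4] by simp
  have b2: "B ^ 2 * Zs ^ 2 - B ^ 2 * Zs ^ 1 \<in> Rdeg 2" unfolding B_def by (intro Rdeg_diff mBZ) auto
  have b2': "Xc 1 ^ 2 + Xc 2 \<in> Rdeg 2" using Rdeg_pow[OF mX1, of 2] mX2 by (intro Rdeg_add) auto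
  have a5: "(B ^ 2 * Zs ^ 2 - B ^ 2 * Zs ^ 1) * (Xc 1 ^ 2 + Xc 2) \<in> Rdeg 4"
    using Rdeg_mult[OF b2 b2'] by simp
  have b3: "8 * (B ^ 3 * Zs ^ 3) - 11 * (B ^ 3 * Zs ^ 2) + 3 * (B ^ 3 * Zs ^ 1) \<in> Rdeg 3"
    unfolding B_def by (intro Rdeg_add Rdeg_diff Rdeg_numeral mBZ) auto
  have a6: "(8 * (B ^ 3 * Zs ^ 3) - 11 * (B ^ 3 * Zs ^ 2) + 3 * (B ^ 3 * Zs ^ 1)) * Xc 1 \<in> Rdeg 4"
    using Rdeg_mult[OF b3 mX1] by simp
  have a7: "- (396 * (B ^ 4 * Zs ^ 4)) + 714 * (B ^ 4 * Zs ^ 3) - 341 * (B ^ 4 * Zs ^ 2) + 23 * (B ^ 4 * Zs ^ 1) \<in> Rdeg 4"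
    unfolding B_def by (intro Rdeg_add Rdeg_diff Rdeg_numeral Rdeg_uminus mBZ) auto
  show ?thesis unfolding e
    by (intro Rdeg_add Rdeg_diff Rdeg_uminus Rdeg_numeral Rdeg_smult a1 a2 a3 a4 a5 a6 a7)
qed

lemma duY_mem: "du Yc \<in> Rdeg 2"
proof -
  have e: "du Yc = - 3 * Xc 2 - Yc ^ 2 - Xc 1 ^ 2
     - fps_const (3/5) * (inverse L ^ 2 * Zs ^ 2 - inverse L ^ 2 * Zs ^ 1)"
    unfolding Y_ident by algebra
  have f1: "inverse L ^ 2 * Zs ^ 2 - inverse L ^ 2 * Zs ^ 1 \<in> Rdeg 2" by (intro Rdeg_diff mBZ) auto
  have f2: "Yc ^ 2 \<in> Rdeg 2" using Rdeg_pow[OF mY, of 2] by simp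
  have f3: "Xc 1 ^ 2 \<in> Rdeg 2" using Rdeg_pow[OF mX1, of 2] by simp
  have "3 * Xc 2 \<in> Rdeg 2" by (rule Rdeg_numeral[OF mX2])
  then have f4: "- 3 * Xc 2 \<in> Rdeg 2" using Rdeg_uminus by fastforce
  show ?thesis unfolding e by (rule Rdeg_diff[OF Rdeg_diff[OF Rdeg_diff[OF f4 f2] f3] Rdeg_smult[OF f1]])
qed

definition Good :: "nat \<Rightarrow> rat fps \<Rightarrow> bool" where
  "Good n f \<longleftrightarrow> f \<in> Rdeg n \<and> du f \<in> Rdeg (Suc n)"

lemma Good_mult: "Good n f \<Longrightarrow> Good k g \<Longrightarrow> Good (n + k) (f * g)"
  unfolding Good_def du_mult
proof (elim conjE, intro conjI)
  assume a: "f \<in> Rdeg n" "du f \<in> Rdeg (Suc n)" "g \<in> Rdeg k" "du g \<in> Rdeg (Suc k)"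
  show "f * g \<in> Rdeg (n + k)" using a by (intro Rdeg_mult)
  have "du f * g \<in> Rdeg (Suc n + k)" using a by (intro Rdeg_mult)
  moreover have "f * du g \<in> Rdeg (n + Suc k)" using a by (intro Rdeg_mult)
  ultimately show "du f * g + f * du g \<in> Rdeg (Suc (n + k))" by (intro Rdeg_add) auto
qed

lemma Good_one: "Good 0 1" unfolding Good_def du_one using Rdeg_one Rdeg_zero by simp

lemma Good_pow: "Good n f \<Longrightarrow> Good (k * n) (f ^ k)"
proof (induction k)
  case 0 then show ?case using Good_one by simp
next
  case (Suc k)
  then have "Good (n + k * n) (f * f ^ k)" by (intro Good_mult)
  then show ?case by simp
qed

lemma Good_monval: "admissible m \<Longrightarrow> Good (mdeg m) (monval m)"
proof -
  assume adm: "admissible m"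
  obtain i j k l a b where e: "m = (i, j, k, l, a, b)" by (cases m) auto
  have s: "Suc 1 = 2" "Suc 2 = 3" by simp_all
  have g1: "Good 1 (Xc 1)" unfolding Good_def s using mX1 mX2 Xc2_eq by simp
  have g2: "Good 2 (Xc 2)" unfolding Good_def s using mX2 mX3 Xc3_eq by simp
  have g3: "Good 3 (Xc 3)" unfolding Good_def using mX3 duX3_mem by simp
  have gY: "Good 1 Yc" unfolding Good_def s using mY duY_mem by simp
  have gB: "Good a (inverse L ^ a * Zs ^ b)" unfolding Good_def using adm e mBZ duBZ_mem by auto
  have G: "Good (i * 1 + j * 2 + k * 3 + l * 1 + a)
      (Xc 1 ^ i * Xc 2 ^ j * Xc 3 ^ k * Yc ^ l * (inverse L ^ a * Zs ^ b))"
    by (intro Good_mult Good_pow g1 g2 g3 gY gB)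
  have meq: "monval m = Xc 1 ^ i * Xc 2 ^ j * Xc 3 ^ k * Yc ^ l * (inverse L ^ a * Zs ^ b)"
    unfolding e by (simp only: monval.simps mult.assoc)
  have deq: "mdeg m = i * 1 + j * 2 + k * 3 + l * 1 + a" unfolding e by simp
  show ?thesis unfolding meq deq by (rule G)
qed

lemma du_Rdeg: "f \<in> Rdeg n \<Longrightarrow> du f \<in> Rdeg (Suc n)"
proof -
  assume "f \<in> Rdeg n"
  then obtain M c where M: "finite M" "\<forall>m\<in>M. admissible m \<and> mdeg m = n"
     "f = (\<Sum>m\<in>M. fps_const (c m) * monval m)" unfolding Rdeg_def by blast
  have "du f = (\<Sum>m\<in>M. fps_const (c m) * du (monval m))" unfolding M(3) du_sum du_cmult ..
  also have "\<dots> \<in> Rdeg (Suc n)" unfolding Rdeg_Rgen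
  proof (intro Rgen_sum M(1) Rgen_smult)
    fix m assume "m \<in> M"
    then have "admissible m" "mdeg m = n" using M(2) by auto
    then show "du (monval m) \<in> Rgen (\<lambda>m. admissible m \<and> mdeg m = Suc n)"
      using Good_monval[of m] unfolding Good_def Rdeg_Rgen by auto
  qed
  finally show ?thesis .
qed

lemma du_Rset: "f \<in> Rset \<Longrightarrow> du f \<in> Rset"
proof -
  assume "f \<in> Rset"
  then obtain M c where M: "finite M" "\<forall>m\<in>M. admissible m"
     "f = (\<Sum>m\<in>M. fps_const (c m) * monval m)" unfolding Rset_def by blast
  have "du f = (\<Sum>m\<in>M. fps_const (c m) * du (monval m))" unfolding M(3) du_sum du_cmult ..
  also have "\<dots> \<in> Rset" unfolding Rset_Rgen
  proof (intro Rgen_sum M(1) Rgen_smult)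
    fix m assume "m \<in> M"
    then have "admissible m" using M(2) by auto
    then have "du (monval m) \<in> Rgen (\<lambda>m'. admissible m' \<and> mdeg m' = Suc (mdeg m))"
      using Good_monval[of m] unfolding Good_def Rdeg_Rgen by auto
    then show "du (monval m) \<in> Rgen admissible" by (rule Rgen_mono) simp
  qed
  finally show ?thesis .
qed

theorem mainTheorem6:
  shows "du (Xc 1) = Xc 2
    \<and> du (Xc 2) = Xc 3
    \<and> (\<forall>a b :: nat. du (inverse L ^ a * Zs ^ b)
           = fps_const ((5 * of_nat b - of_nat a) / 5) * inverse L ^ a * Zs ^ b
             * inverse L * (Zs - 1))
    \<and> du Yc = - 3 * Xc 2 - Yc ^ 2 - Xc 1 ^ 2
           - fps_const (3 / 5) * inverse L ^ 2 * Zs * (Zs - 1)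
    \<and> du (Xc 3) = - 4 * Xc 1 * Xc 3 - 3 * Xc 2 ^ 2 - 6 * Xc 1 ^ 2 * Xc 2 - Xc 1 ^ 4
           - fps_const (3 / 5) * inverse L ^ 2 * Zs * (Zs - 1) * (Xc 1 ^ 2 + Xc 2)
           - fps_const (3 / 25) * inverse L ^ 3 * Zs * (Zs - 1) * (8 * Zs - 3) * Xc 1
           + fps_const (1 / 625) * inverse L ^ 4 * Zs
               * (- 396 * Zs ^ 3 + 714 * Zs ^ 2 - 341 * Zs + 23)
    \<and> du ` Rset \<subseteq> Rset
    \<and> (\<forall>n. du ` Rdeg n \<subseteq> Rdeg (Suc n))"
  using Xc2_eq Xc3_eq BZ_ident Y_ident X3_ident du_Rset du_Rdeg by auto

end
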